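(* Let $\alpha>0$ and let $X_1,\dots,X_n$ be i.i.d. with probability density $f_0$ on $[0,1]$ with $0<\rho_0\le f_0\le D_0<\infty$; set $g_0=\log f_0$. Let $h_n=(n/\log n)^{-1/(2\alpha+1)}$ and $L_n=\lfloor\log_2(1/h_n)\rfloor$. For each $n$ let $\{\mathcal A_{l,k}: 0\le l\le L_n,\ 0\le k\le2^l-1\}\subset L^\infty[0,1]$ (possibly depending on $n$) satisfy, for constants $c_1,c_2$ independent of $n,l,k$, $$\|\mathcal A_{l,k}\|_\infty\le c_1\sqrt{n/\log n},\qquad\|\mathcal A_{l,k}\|_2\le c_2 .$$ Define $\Gamma^{L_n}=g_0^{L_n}+n^{-1/2}\sum_{l=0}^{L_n}\sum_{k=0}^{2^l-1}W_n(\mathcal A_{l,k})\psi_{lk}$, where $g_0^{L_n}=\sum_{l\le L_n}\sum_k\langle g_0,\psi_{lk}\rangle_2\psi_{lk}$. Then there is a constant $C$ such that for all $n\ge2$, $$E_{f_0}^n\big\|\Gamma^{L_n}-g_0^{L_n}\big\|_\infty\le C\Big(\frac{\log n}{n}\Big)^{\alpha/(2\alpha+1)}.$$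
   Context: $W_n(u)=n^{-1/2}\sum_{i=1}^n\big(u(X_i)-\int_0^1uf_0\big)$. $\{\psi_{lk}: l\ge0,\ 0\le k\le2^l-1\}$ is the boundary-corrected (Cohen–Daubechies–Vial) wavelet orthonormal basis of $L^2[0,1]$, relabelled so levels start at $0$, with $\|\sum_k|\psi_{lk}|\|_\infty\lesssim2^{l/2}$. $E^n_{f_0}$ is expectation under i.i.d. $f_0$ sampling. *)

theory Defs
  imports "HOL-Probability.Probability"
begin

abbreviation leb01 :: "real measure" where
  "leb01 \<equiv> restrict_space lborel {0..1}"

definition inner01 :: "(real \<Rightarrow> real) \<Rightarrow> (real \<Rightarrow> real) \<Rightarrow> real" where
  "inner01 f g = (LINT x:{0..1}|lborel. f x * g x)"

definition linf01 :: "(real \<Rightarrow> real) \<Rightarrow> ereal" where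
  "linf01 f = esssup leb01 (\<lambda>x. ereal \<bar>f x\<bar>)"

definition sample_law :: "(real \<Rightarrow> real) \<Rightarrow> real measure" where
  "sample_law f0 = density leb01 (\<lambda>x. ennreal (f0 x))"

definition sample_space :: "(real \<Rightarrow> real) \<Rightarrow> nat \<Rightarrow> (nat \<Rightarrow> real) measure" where
  "sample_space f0 n = PiM {..<n} (\<lambda>_. sample_law f0)"

definition Wn :: "(real \<Rightarrow> real) \<Rightarrow> nat \<Rightarrow> (real \<Rightarrow> real) \<Rightarrow> (nat \<Rightarrow> real) \<Rightarrow> real" where
  "Wn f0 n u \<omega> = (1 / sqrt (real n)) * (\<Sum>i<n. u (\<omega> i) - (LINT x:{0..1}|lborel. u x * f0 x))"

definition hn :: "real \<Rightarrow> nat \<Rightarrow> real" where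
  "hn \<alpha> n = (real n / ln (real n)) powr (- 1 / (2 * \<alpha> + 1))"

definition Ln :: "real \<Rightarrow> nat \<Rightarrow> nat" where
  "Ln \<alpha> n = nat \<lfloor>log 2 (1 / hn \<alpha> n)\<rfloor>"

definition wproj :: "(nat \<Rightarrow> nat \<Rightarrow> real \<Rightarrow> real) \<Rightarrow> (real \<Rightarrow> real) \<Rightarrow> nat \<Rightarrow> real \<Rightarrow> real" where
  "wproj \<psi> g L x = (\<Sum>l\<le>L. \<Sum>k<2^l. inner01 g (\<psi> l k) * \<psi> l k x)"

definition Gamma :: "(nat \<Rightarrow> nat \<Rightarrow> real \<Rightarrow> real) \<Rightarrow> (real \<Rightarrow> real) \<Rightarrow> nat \<Rightarrow> nat
    \<Rightarrow> (nat \<Rightarrow> nat \<Rightarrow> real \<Rightarrow> real) \<Rightarrow> (nat \<Rightarrow> real) \<Rightarrow> real \<Rightarrow> real" where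
  "Gamma \<psi> f0 n L A \<omega> x = wproj \<psi> (\<lambda>y. ln (f0 y)) L x
     + (1 / sqrt (real n)) * (\<Sum>l\<le>L. \<Sum>k<2^l. Wn f0 n (A l k) \<omega> * \<psi> l k x)"

definition wavelet_onb :: "(nat \<Rightarrow> nat \<Rightarrow> real \<Rightarrow> real) \<Rightarrow> bool" where
  "wavelet_onb \<psi> \<longleftrightarrow>
     (\<forall>l k. \<psi> l k \<in> borel_measurable borel) \<and>
     (\<forall>l k. set_integrable lborel {0..1} (\<lambda>x. (\<psi> l k x)\<^sup>2)) \<and>
     (\<forall>l k l' k'. k < 2^l \<longrightarrow> k' < 2^l' \<longrightarrow>
        inner01 (\<psi> l k) (\<psi> l' k') = (if l = l' \<and> k = k' then 1 else 0)) \<and>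
     (\<forall>f. f \<in> borel_measurable borel \<longrightarrow> set_integrable lborel {0..1} (\<lambda>x. (f x)\<^sup>2) \<longrightarrow>
        (\<forall>l k. k < 2^l \<longrightarrow> inner01 f (\<psi> l k) = 0) \<longrightarrow>
        (AE x in lborel. x \<in> {0..1} \<longrightarrow> f x = 0))"

end

theory Submission
  imports Defs "HOL-Probability.Probability"
begin

lemma exp_quad_neg:
  fixes y :: real assumes "y \<le> 0" "-1 \<le> y" shows "exp y \<le> 1 + y + y^2"
proof -
  define x where "x = -y"
  have x: "0 \<le> x" "x \<le> 1" using assms by (auto simp: x_def)
  have e: "1 + x \<le> exp x" by (rule exp_ge_add_one_self)
  have "exp y = inverse (exp x)" by (simp add: x_def exp_minus)
  also have "\<dots> \<le> inverse (1 + x)" using e x by (intro le_imp_inverse_le) auto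
  also have "\<dots> \<le> 1 - x + x^2"
  proof -
    have "1 \<le> (1 + x) * (1 - x + x^2)" using x by (simp add: algebra_simps power2_eq_square power3_eq_cube)
    thus ?thesis using x by (simp add: field_simps)
  qed
  finally show ?thesis by (simp add: x_def)
qed

lemma exp_quad:
  fixes y :: real assumes "\<bar>y\<bar> \<le> 1" shows "exp y \<le> 1 + y + y^2"
  using assms exp_bound[of y] exp_quad_neg[of y] by (cases "y \<ge> 0") auto

lemma max_bound:
  fixes w :: "'k \<Rightarrow> real" and lam a :: real
  assumes "finite K" "k \<in> K" "lam > 0"
  shows "\<bar>w k\<bar> \<le> (a + exp (-a) * (\<Sum>j\<in>K. exp (lam * w j) + exp (- (lam * w j)))) / lam"
proof -
  have "lam * \<bar>w k\<bar> - a \<le> exp (lam * \<bar>w k\<bar> - a)"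
    using exp_ge_add_one_self[of "lam * \<bar>w k\<bar> - a"] by linarith
  also have "\<dots> = exp (-a) * exp (lam * \<bar>w k\<bar>)" by (simp add: exp_diff exp_minus field_simps)
  also have "exp (lam * \<bar>w k\<bar>) \<le> exp (lam * w k) + exp (- (lam * w k))"
    by (cases "w k \<ge> 0") (auto simp: add_increasing add_increasing2)
  also have "\<dots> \<le> (\<Sum>j\<in>K. exp (lam * w j) + exp (- (lam * w j)))"
    using assms by (intro member_le_sum) (auto simp: add_pos_pos intro: add_nonneg_nonneg)
  finally have "lam * \<bar>w k\<bar> - a \<le> exp (-a) * (\<Sum>j\<in>K. exp (lam * w j) + exp (- (lam * w j)))"
    by (simp add: mult_left_mono)
  thus ?thesis using assms(3) by (simp add: field_simps)
qed

lemma quad_pos: "0 \<le> 1 + (z::real) + z\<^sup>2"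
proof -
  have "0 \<le> (z + 1/2)\<^sup>2" by simp
  thus ?thesis by (simp add: power2_eq_square algebra_simps)
qed

lemma mgf_single:
  fixes g :: "'a \<Rightarrow> real"
  assumes M: "prob_space M" and g: "g \<in> borel_measurable M"
    and bnd: "AE x in M. \<bar>g x\<bar> \<le> b" and t: "\<bar>t\<bar> * (2*b) \<le> 1"
  shows "(\<integral>\<^sup>+x. ennreal (exp (t * (g x - (\<integral>y. g y \<partial>M)))) \<partial>M)
           \<le> ennreal (exp (t\<^sup>2 * (\<integral>y. (g y)\<^sup>2 \<partial>M)))"
proof -
  interpret prob_space M by (rule M)
  define m where "m = (\<integral>y. g y \<partial>M)"
  have ig: "integrable M g" using bnd g by (intro integrable_const_bound[of _ b]) auto
  have bnd2: "AE x in M. norm ((g x)\<^sup>2) \<le> b\<^sup>2"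
    using bnd by eventually_elim (metis abs_ge_zero power2_abs power_mono real_norm_def abs_power2)
  have ig2: "integrable M (\<lambda>x. (g x)\<^sup>2)" using bnd2 g by (intro integrable_const_bound[of _ "b\<^sup>2"]) auto
  have "\<bar>m\<bar> \<le> (\<integral>y. \<bar>g y\<bar> \<partial>M)" unfolding m_def by (rule integral_abs_bound)
  also have "\<dots> \<le> (\<integral>y. b \<partial>M)" using bnd ig by (intro integral_mono_AE) auto
  also have "\<dots> = b" by (simp add: prob_space)
  finally have mb: "\<bar>m\<bar> \<le> b" .
  have pt: "AE x in M. exp (t * (g x - m)) \<le> (1 - t*m + t\<^sup>2*m\<^sup>2) + (t - 2*t\<^sup>2*m) * g x + t\<^sup>2 * (g x)\<^sup>2"
    using bnd
  proof eventually_elim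
    case (elim x)
    have "\<bar>t * (g x - m)\<bar> \<le> \<bar>t\<bar> * (\<bar>g x\<bar> + \<bar>m\<bar>)"
      by (simp add: abs_mult mult_left_mono)
    also have "\<dots> \<le> \<bar>t\<bar> * (2*b)" using elim mb by (intro mult_left_mono) auto
    finally have "\<bar>t * (g x - m)\<bar> \<le> 1" using t by linarith
    from exp_quad[OF this] show ?case by (simp add: algebra_simps power2_eq_square)
  qed
  have nonneg: "0 \<le> (1 - t*m + t\<^sup>2*m\<^sup>2) + (t - 2*t\<^sup>2*m) * g x + t\<^sup>2 * (g x)\<^sup>2" for x
  proof -
    have "(1 - t*m + t\<^sup>2*m\<^sup>2) + (t - 2*t\<^sup>2*m) * g x + t\<^sup>2 * (g x)\<^sup>2 = 1 + t*(g x - m) + (t*(g x - m))\<^sup>2"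
      by (simp add: algebra_simps power2_eq_square)
    also have "\<dots> \<ge> 0" by (rule quad_pos)
    finally show ?thesis by simp
  qed
  have "(\<integral>\<^sup>+x. ennreal (exp (t * (g x - m))) \<partial>M)
      \<le> (\<integral>\<^sup>+x. ennreal ((1 - t*m + t\<^sup>2*m\<^sup>2) + (t - 2*t\<^sup>2*m) * g x + t\<^sup>2 * (g x)\<^sup>2) \<partial>M)"
    using pt by (intro nn_integral_mono_AE) (auto elim!: eventually_mono intro: ennreal_leI)
  also have "\<dots> = ennreal (\<integral>x. (1 - t*m + t\<^sup>2*m\<^sup>2) + (t - 2*t\<^sup>2*m) * g x + t\<^sup>2 * (g x)\<^sup>2 \<partial>M)"
    using ig ig2 nonneg by (intro nn_integral_eq_integral) auto
  also have "(\<integral>x. (1 - t*m + t\<^sup>2*m\<^sup>2) + (t - 2*t\<^sup>2*m) * g x + t\<^sup>2 * (g x)\<^sup>2 \<partial>M)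
      = (1 - t*m + t\<^sup>2*m\<^sup>2) + (t - 2*t\<^sup>2*m) * m + t\<^sup>2 * (\<integral>x. (g x)\<^sup>2 \<partial>M)"
    using ig ig2 by (simp add: m_def prob_space)
  also have "\<dots> = 1 + t\<^sup>2 * (\<integral>x. (g x)\<^sup>2 \<partial>M) - t\<^sup>2 * m\<^sup>2" by (simp add: algebra_simps power2_eq_square)
  also have "\<dots> \<le> exp (t\<^sup>2 * (\<integral>x. (g x)\<^sup>2 \<partial>M))"
    using exp_ge_add_one_self[of "t\<^sup>2 * (\<integral>x. (g x)\<^sup>2 \<partial>M)"] by (smt (verit) zero_le_power2 mult_nonneg_nonneg)
  finally show ?thesis unfolding m_def by (simp add: ennreal_leI order_trans)
qed

lemma mgf_prod:
  fixes h :: "'a \<Rightarrow> real"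
  assumes M: "prob_space M" and h: "h \<in> borel_measurable M"
  shows "(\<integral>\<^sup>+\<omega>. ennreal (exp (\<Sum>i<n. h (\<omega> i))) \<partial>PiM {..<n} (\<lambda>_. M))
           = (\<integral>\<^sup>+x. ennreal (exp (h x)) \<partial>M) ^ n"
proof -
  interpret product_prob_space "\<lambda>_::nat. M" using M
    by (simp add: product_prob_space_def product_prob_space_axioms_def product_sigma_finite_def prob_space_imp_sigma_finite)
  have "(\<integral>\<^sup>+\<omega>. ennreal (exp (\<Sum>i<n. h (\<omega> i))) \<partial>PiM {..<n} (\<lambda>_. M))
      = (\<integral>\<^sup>+\<omega>. (\<Prod>i\<in>{..<n}. (\<lambda>i x. ennreal (exp (h x))) i (\<omega> i)) \<partial>PiM {..<n} (\<lambda>_. M))"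
    by (simp add: exp_sum prod_ennreal)
  also have "\<dots> = (\<Prod>i\<in>{..<n}. integral\<^sup>N M (\<lambda>x. ennreal (exp (h x))))"
    using h by (intro product_nn_integral_prod) auto
  also have "\<dots> = (\<integral>\<^sup>+x. ennreal (exp (h x)) \<partial>M) ^ n" by simp
  finally show ?thesis .
qed

lemma geom_sum: "(\<Sum>l\<le>L. (2::real) powr (real l / 2)) \<le> 4 * 2 powr (real L / 2)"
proof (induction L)
  case 0 then show ?case by simp
next
  case (Suc L)
  have s2: "sqrt 2 \<ge> (1.4::real)" by (rule real_le_rsqrt) (simp add: power2_eq_square)
  have e: "(2::real) powr (real (Suc L) / 2) = 2 powr (real L / 2) * sqrt 2"
    by (simp add: add_divide_distrib powr_add powr_half_sqrt)
  have pos: "(0::real) < 2 powr (real L / 2)" by simp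
  have "(\<Sum>l\<le>Suc L. (2::real) powr (real l / 2)) \<le> 4 * 2 powr (real L / 2) + 2 powr (real L / 2) * sqrt 2"
    using Suc e by simp
  also have "\<dots> \<le> 4 * (2 powr (real L / 2) * sqrt 2)"
  proof -
    have "4 + sqrt 2 \<le> 4 * sqrt 2" using s2 by simp
    hence "2 powr (real L / 2) * (4 + sqrt 2) \<le> 2 powr (real L / 2) * (4 * sqrt 2)"
      using pos by (intro mult_left_mono) auto
    thus ?thesis by (simp add: algebra_simps)
  qed
  finally show ?case using e by simp
qed

lemma final_arith:
  fixes \<alpha> c sig Cp :: real and n :: nat
  assumes alpha: "\<alpha> > 0" and n: "n \<ge> 2" and c: "c \<ge> 1" and sig: "sig \<ge> 0" and Cp: "Cp \<ge> 0"
  defines "lam \<equiv> sqrt (ln (real n)) / (2*c)"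
  shows "(1 / sqrt (real n)) * (\<Sum>l\<le>Ln \<alpha> n. Cp * 2 powr (real l / 2) *
            (((real l + 1) * ln 2 + lam\<^sup>2 * sig + 1) / lam))
         \<le> 4 * Cp * (7 * 2 * c + sig / (2*c)) * (ln (real n) / real n) powr (\<alpha> / (2 * \<alpha> + 1))"
proof -
  define L where "L = Ln \<alpha> n"
  define p where "p = 1 / (2 * \<alpha> + 1)"
  define q where "q = real n / ln (real n)"
  have p: "0 < p" "p \<le> 1" using alpha by (auto simp: p_def)
  have ln2: "2/3 \<le> ln (2::real)" by (rule ln2_ge_two_thirds)
  have lnn: "ln 2 \<le> ln (real n)" using n by simp
  have lnpos: "0 < ln (real n)" using n by simp
  have q1: "1 \<le> q" unfolding q_def using lnpos ln_less_self[of "real n"] n by (simp add: less_imp_le)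
  have qn: "q \<le> 2 * real n" proof -
    have "1 \<le> 2 * ln (real n)" using lnn ln2 by linarith
    hence "real n * 1 \<le> real n * (2 * ln (real n))" by (intro mult_left_mono) auto
    thus ?thesis unfolding q_def using lnpos by (subst pos_divide_le_eq) (auto simp: algebra_simps)
  qed
  have hinv: "1 / hn \<alpha> n = q powr p"
  proof -
    have "- 1 / (2 * \<alpha> + 1) = - p" unfolding p_def by simp
    hence "hn \<alpha> n = q powr (- p)" unfolding hn_def q_def by simp
    thus ?thesis by (simp add: powr_minus_divide)
  qed
  define y where "y = log 2 (1 / hn \<alpha> n)"
  have y0: "0 \<le> y" unfolding y_def hinv using q1 p ge_one_powr_ge_zero[of q p] by simp
  have Ly: "real L \<le> y" unfolding L_def Ln_def y_def[symmetric] using y0 by simp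
  have qp: "q powr p \<le> q" using q1 p powr_mono[of p 1 q] by simp
  have y_le: "y \<le> 1 + ln (real n) / ln 2"
  proof -
    have "y \<le> log 2 (2 * real n)" unfolding y_def hinv
      using q1 qp qn by (intro log_le_cancel_iff[THEN iffD2]) (auto intro: order_trans[OF _ ge_one_powr_ge_zero])
    also have "\<dots> = 1 + ln (real n) / ln 2" using n by (simp add: log_mult) (simp add: log_def)
    finally show ?thesis .
  qed
  have twoL: "2 powr (real L / 2) \<le> q powr (p/2)"
  proof -
    have "2 powr real L \<le> 2 powr y" using Ly by simp
    also have "\<dots> = q powr p" unfolding y_def hinv using q1 by simp
    finally have "2 powr real L \<le> q powr p" .
    hence "sqrt (2 powr real L) \<le> sqrt (q powr p)" by simp
    thus ?thesis using q1 by (simp add: powr_half_sqrt_powr)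
  qed
  have lampos: "0 < lam" unfolding lam_def using lnpos c by simp
  define K where "K = 7 * 2 * c + sig / (2*c)"
  have trm: "((real l + 1) * ln 2 + lam\<^sup>2 * sig + 1) / lam \<le> K * sqrt (ln (real n))" if "l \<le> L" for l
  proof -
    have "(real l + 1) * ln 2 \<le> (real L + 1) * ln 2" using that by (intro mult_right_mono) auto
    also have "\<dots> \<le> (2 + ln (real n) / ln 2) * ln 2" using Ly y_le ln2 by (intro mult_right_mono) auto
    also have "\<dots> = 2 * ln 2 + ln (real n)" using ln2 by (simp add: field_simps)
    finally have "(real l + 1) * ln 2 + 1 \<le> 7 * ln (real n)" using lnn ln2 ln_2_less_1 by linarith
    hence "((real l + 1) * ln 2 + 1) / lam \<le> 7 * ln (real n) / lam" using lampos by (intro divide_right_mono) auto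
    also have "\<dots> = 7 * 2 * c * sqrt (ln (real n))"
      unfolding lam_def using lnpos c by (simp add: field_simps)
    finally have a: "((real l + 1) * ln 2 + 1) / lam \<le> 7 * 2 * c * sqrt (ln (real n))" .
    have b: "lam\<^sup>2 * sig / lam = sig / (2*c) * sqrt (ln (real n))"
    proof -
      have "lam\<^sup>2 * sig / lam = lam * sig" using lampos by (simp add: power2_eq_square)
      also have "\<dots> = sig / (2*c) * sqrt (ln (real n))" unfolding lam_def by simp
      finally show ?thesis .
    qed
    have "((real l + 1) * ln 2 + lam\<^sup>2 * sig + 1) / lam = ((real l + 1) * ln 2 + 1) / lam + lam\<^sup>2 * sig / lam"
      by (simp add: add_divide_distrib[symmetric] algebra_simps)
    also have "\<dots> \<le> K * sqrt (ln (real n))" using a b by (simp add: K_def algebra_simps)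
    finally show ?thesis .
  qed
  have K0: "0 \<le> K" unfolding K_def using c sig by simp
  have "(\<Sum>l\<le>L. Cp * 2 powr (real l / 2) * (((real l + 1) * ln 2 + lam\<^sup>2 * sig + 1) / lam))
      \<le> (\<Sum>l\<le>L. Cp * 2 powr (real l / 2) * (K * sqrt (ln (real n))))"
    using trm Cp by (intro sum_mono mult_left_mono) auto
  also have "\<dots> = Cp * K * sqrt (ln (real n)) * (\<Sum>l\<le>L. 2 powr (real l / 2))"
    by (simp add: sum_distrib_left algebra_simps)
  also have "\<dots> \<le> Cp * K * sqrt (ln (real n)) * (4 * q powr (p/2))"
    using geom_sum[of L] twoL Cp K0 lnpos by (intro mult_left_mono) auto
  finally have S: "(\<Sum>l\<le>L. Cp * 2 powr (real l / 2) * (((real l + 1) * ln 2 + lam\<^sup>2 * sig + 1) / lam))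
      \<le> 4 * Cp * K * (sqrt (ln (real n)) * q powr (p/2))" by (simp add: algebra_simps)
  have eqr: "(1 / sqrt (real n)) * (sqrt (ln (real n)) * q powr (p/2)) = (ln (real n) / real n) powr (\<alpha> / (2 * \<alpha> + 1))"
  proof -
    have "(1 / sqrt (real n)) * sqrt (ln (real n)) = (ln (real n) / real n) powr (1/2)"
      using lnpos n by (simp add: powr_half_sqrt real_sqrt_divide)
    moreover have "q powr (p/2) = (ln (real n) / real n) powr (- (p/2))"
      unfolding q_def using lnpos n by (simp add: powr_minus_divide powr_divide)
    moreover have "(ln (real n) / real n) powr (1/2) * (ln (real n) / real n) powr (- (p/2))
        = (ln (real n) / real n) powr (\<alpha> / (2 * \<alpha> + 1))"
    proof -
      have "1/2 + - (p/2) = \<alpha> / (2 * \<alpha> + 1)" unfolding p_def using alpha by (simp add: field_simps)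
      thus ?thesis using lnpos n by (simp add: powr_add[symmetric])
    qed
    ultimately show ?thesis by (metis mult.assoc)
  qed
  have "(1 / sqrt (real n)) * (\<Sum>l\<le>L. Cp * 2 powr (real l / 2) * (((real l + 1) * ln 2 + lam\<^sup>2 * sig + 1) / lam))
      \<le> (1 / sqrt (real n)) * (4 * Cp * K * (sqrt (ln (real n)) * q powr (p/2)))"
    using S by (intro mult_left_mono) auto
  also have "\<dots> = 4 * Cp * K * (ln (real n) / real n) powr (\<alpha> / (2 * \<alpha> + 1))"
    using eqr by (metis mult.left_commute)
  finally show ?thesis unfolding L_def K_def .
qed

lemma max_bound2:
  fixes w :: "'k \<Rightarrow> real" and lam a :: real
  assumes "finite K" "k \<in> K" "lam > 0"
  shows "\<bar>w k\<bar> \<le> a / lam + (\<Sum>(j,s)\<in>K \<times> {-1,1::real}. exp (-a) / lam * exp (s * lam * w j))"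
proof -
  have e: "(\<Sum>(j,s)\<in>K \<times> {-1,1::real}. exp (-a) / lam * exp (s * lam * w j))
      = exp (-a) / lam * (\<Sum>j\<in>K. exp (lam * w j) + exp (- (lam * w j)))"
    by (simp add: sum.cartesian_product[symmetric] sum_distrib_left algebra_simps)
  have "\<bar>w k\<bar> \<le> (a + exp (-a) * (\<Sum>j\<in>K. exp (lam * w j) + exp (- (lam * w j)))) / lam"
    by (rule max_bound[OF assms])
  also have "\<dots> = a / lam + exp (-a) / lam * (\<Sum>j\<in>K. exp (lam * w j) + exp (- (lam * w j)))"
    by (simp add: add_divide_distrib)
  finally show ?thesis using e by simp
qed

lemma nn_sum_bound:
  assumes "finite J" "\<And>j. j \<in> J \<Longrightarrow> f j \<in> borel_measurable M" "\<And>j x. j \<in> J \<Longrightarrow> 0 \<le> f j x"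
    "\<And>j. j \<in> J \<Longrightarrow> (\<integral>\<^sup>+x. ennreal (f j x) \<partial>M) \<le> ennreal (r j)" "\<And>j. j \<in> J \<Longrightarrow> 0 \<le> r j"
  shows "(\<integral>\<^sup>+x. ennreal (\<Sum>j\<in>J. f j x) \<partial>M) \<le> ennreal (\<Sum>j\<in>J. r j)"
proof -
  have "(\<integral>\<^sup>+x. ennreal (\<Sum>j\<in>J. f j x) \<partial>M) = (\<integral>\<^sup>+x. (\<Sum>j\<in>J. ennreal (f j x)) \<partial>M)"
    using assms(3) by (intro nn_integral_cong) (simp add: sum_ennreal)
  also have "\<dots> = (\<Sum>j\<in>J. \<integral>\<^sup>+x. ennreal (f j x) \<partial>M)" using assms(2) by (intro nn_integral_sum) auto
  also have "\<dots> \<le> (\<Sum>j\<in>J. ennreal (r j))" using assms(4) by (intro sum_mono) auto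
  also have "\<dots> = ennreal (\<Sum>j\<in>J. r j)" using assms(5) by (simp add: sum_ennreal)
  finally show ?thesis .
qed

lemma nn_cmult_bound:
  assumes "f \<in> borel_measurable M" "0 \<le> c" "(\<integral>\<^sup>+x. ennreal (f x) \<partial>M) \<le> ennreal r" "0 \<le> r"
  shows "(\<integral>\<^sup>+x. ennreal (c * f x) \<partial>M) \<le> ennreal (c * r)"
proof -
  have "(\<integral>\<^sup>+x. ennreal (c * f x) \<partial>M) = (\<integral>\<^sup>+x. ennreal c * ennreal (f x) \<partial>M)"
    using assms(2) by (intro nn_integral_cong) (simp add: ennreal_mult')
  also have "\<dots> = ennreal c * (\<integral>\<^sup>+x. ennreal (f x) \<partial>M)" using assms(1) by (intro nn_integral_cmult) auto
  also have "\<dots> \<le> ennreal c * ennreal r" using assms(3) by (intro mult_left_mono) auto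
  also have "\<dots> = ennreal (c * r)" using assms by (simp add: ennreal_mult)
  finally show ?thesis .
qed

lemma leb01_prob: "prob_space leb01"
  by (intro prob_space_restrict_space) auto

lemma meas_leb01: "u \<in> borel_measurable borel \<Longrightarrow> u \<in> borel_measurable leb01"
  by (intro measurable_restrict_space1) simp

context
  fixes f0 :: "real \<Rightarrow> real" and rho0 D0 :: real
  assumes f0_meas: "f0 \<in> borel_measurable borel"
    and rho0: "0 < rho0" and f0b: "\<And>x. x \<in> {0..1} \<Longrightarrow> rho0 \<le> f0 x \<and> f0 x \<le> D0"
    and f0d: "(LINT x:{0..1}|lborel. f0 x) = 1"
begin

lemma f0_leb: "f0 \<in> borel_measurable leb01" using f0_meas by (rule meas_leb01)

lemma f0_nonneg_AE: "AE x in leb01. 0 \<le> f0 x"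
  using f0b rho0 by (intro AE_I2) (auto simp: space_restrict_space; smt (verit) f0b atLeastAtMost_iff)

lemma law_integral:
  assumes u: "u \<in> borel_measurable borel"
  shows "(\<integral>x. u x \<partial>sample_law f0) = (LINT x:{0..1}|lborel. u x * f0 x)"
proof -
  have "(\<integral>x. u x \<partial>sample_law f0) = (\<integral>x. f0 x *\<^sub>R u x \<partial>leb01)"
    unfolding sample_law_def using f0_leb f0_nonneg_AE meas_leb01[OF u]
    by (intro integral_density) auto
  also have "\<dots> = (LINT x:{0..1}|lborel. u x * f0 x)"
    by (subst integral_restrict_space) (auto simp: set_lebesgue_integral_def mult.commute)
  finally show ?thesis .
qed

lemma law_prob: "prob_space (sample_law f0)"
proof (rule prob_spaceI)
  have "emeasure (sample_law f0) (space (sample_law f0)) = (\<integral>\<^sup>+x. ennreal (f0 x) \<partial>leb01)"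
    unfolding sample_law_def using f0_leb sets.top[of leb01]
    by (subst emeasure_density) (auto intro!: nn_integral_cong simp: space_restrict_space)
  also have "\<dots> = ennreal (\<integral>x. f0 x \<partial>leb01)"
  proof (rule nn_integral_eq_integral)
    interpret prob_space leb01 by (rule leb01_prob)
    show "integrable leb01 f0"
      using f0b f0_leb rho0
      by (intro integrable_const_bound[of _ D0] AE_I2) (auto simp: space_restrict_space; smt (verit) f0b atLeastAtMost_iff)
    show "AE x in leb01. 0 \<le> f0 x" by (rule f0_nonneg_AE)
  qed
  also have "(\<integral>x. f0 x \<partial>leb01) = 1"
    using f0d by (subst integral_restrict_space) (auto simp: set_lebesgue_integral_def)
  finally show "emeasure (sample_law f0) (space (sample_law f0)) = 1" by simp
qed

lemma law_AE:
  assumes "AE x in lborel. x \<in> {0..1} \<longrightarrow> Q x"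
  shows "AE x in sample_law f0. Q x"
proof -
  have "AE x in leb01. Q x" using assms by (subst AE_restrict_space_iff) auto
  thus ?thesis unfolding sample_law_def using f0_leb
    by (subst AE_density) (auto elim: eventually_mono)
qed

lemma law_nn:
  assumes u: "u \<in> borel_measurable borel"
  shows "(\<integral>\<^sup>+x. ennreal (u x) \<partial>sample_law f0) \<le> ennreal D0 * (\<integral>\<^sup>+x\<in>{0..1}. ennreal (u x) \<partial>lborel)"
proof -
  have "(\<integral>\<^sup>+x. ennreal (u x) \<partial>sample_law f0) = (\<integral>\<^sup>+x. ennreal (f0 x) * ennreal (u x) \<partial>leb01)"
    unfolding sample_law_def using f0_leb meas_leb01[OF u] by (subst nn_integral_density) auto
  also have "\<dots> \<le> (\<integral>\<^sup>+x. ennreal D0 * ennreal (u x) \<partial>leb01)"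
    using f0b by (intro nn_integral_mono) (auto simp: space_restrict_space intro!: mult_right_mono ennreal_leI)
  also have "\<dots> = ennreal D0 * (\<integral>\<^sup>+x. ennreal (u x) \<partial>leb01)"
    using meas_leb01[OF u] by (intro nn_integral_cmult) auto
  also have "(\<integral>\<^sup>+x. ennreal (u x) \<partial>leb01) = (\<integral>\<^sup>+x\<in>{0..1}. ennreal (u x) \<partial>lborel)"
    by (subst nn_integral_restrict_space) auto
  finally show ?thesis .
qed

lemma W_meas:
  assumes u: "u \<in> borel_measurable borel"
  shows "(\<lambda>\<omega>. Wn f0 n u \<omega>) \<in> borel_measurable (sample_space f0 n)"
proof -
  have [measurable]: "u \<in> borel_measurable (sample_law f0)"
    unfolding sample_law_def using meas_leb01[OF u] by simp
  show ?thesis unfolding Wn_def sample_space_def by measurable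
qed

lemma space_prob: "prob_space (sample_space f0 n)"
  unfolding sample_space_def by (intro prob_space_PiM law_prob)

lemma D0_nonneg: "0 \<le> D0" using f0b[of 0] rho0 by auto

lemma W_mgf:
  fixes A :: "real \<Rightarrow> real" and n :: nat
  assumes n: "n \<ge> 1" and A: "A \<in> borel_measurable borel"
    and Ab: "AE x in lborel. x \<in> {0..1} \<longrightarrow> \<bar>A x\<bar> \<le> b"
    and A2: "(\<integral>\<^sup>+ x\<in>{0..1}. ennreal ((A x)\<^sup>2) \<partial>lborel) \<le> ennreal (c2\<^sup>2)"
    and s: "\<bar>s\<bar> = 1" and lam: "0 \<le> lam" "lam * (2*b) \<le> sqrt (real n)"
  shows "(\<integral>\<^sup>+\<omega>. ennreal (exp (s * lam * Wn f0 n A \<omega>)) \<partial>sample_space f0 n)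
           \<le> ennreal (exp (lam\<^sup>2 * (D0 * c2\<^sup>2)))"
proof -
  define P where "P = sample_law f0"
  interpret P: prob_space P unfolding P_def by (rule law_prob)
  have AP: "A \<in> borel_measurable P" unfolding P_def sample_law_def using meas_leb01[OF A] by simp
  have AbP: "AE x in P. \<bar>A x\<bar> \<le> b" unfolding P_def by (rule law_AE[OF Ab])
  define m where "m = (\<integral>x. A x \<partial>P)"
  have m: "m = (LINT x:{0..1}|lborel. A x * f0 x)" unfolding m_def P_def by (rule law_integral[OF A])
  define t where "t = s * lam / sqrt (real n)"
  have sq: "sqrt (real n) > 0" using n by simp
  have t: "\<bar>t\<bar> * (2*b) \<le> 1"
    using lam sq s by (simp add: t_def abs_mult field_simps)
  have EA2: "(\<integral>x. (A x)\<^sup>2 \<partial>P) \<le> D0 * c2\<^sup>2"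
  proof -
    have bnd2: "AE x in P. norm ((A x)\<^sup>2) \<le> b\<^sup>2"
      using AbP by eventually_elim (metis abs_ge_zero power2_abs power_mono real_norm_def abs_power2)
    have "ennreal (\<integral>x. (A x)\<^sup>2 \<partial>P) = (\<integral>\<^sup>+x. ennreal ((A x)\<^sup>2) \<partial>P)"
      using bnd2 AP by (intro nn_integral_eq_integral[symmetric] P.integrable_const_bound[of _ "b\<^sup>2"]) auto
    also have "\<dots> \<le> ennreal D0 * (\<integral>\<^sup>+ x\<in>{0..1}. ennreal ((A x)\<^sup>2) \<partial>lborel)"
      unfolding P_def using A by (intro law_nn) auto
    also have "\<dots> \<le> ennreal D0 * ennreal (c2\<^sup>2)" using A2 by (intro mult_left_mono) auto
    also have "\<dots> = ennreal (D0 * c2\<^sup>2)" using D0_nonneg by (simp add: ennreal_mult)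
    finally show ?thesis using D0_nonneg by (subst (asm) ennreal_le_iff) auto
  qed
  have eq: "s * lam * Wn f0 n A \<omega> = (\<Sum>i<n. t * (A (\<omega> i) - m))" for \<omega>
    unfolding Wn_def m t_def using sq by (simp add: sum_distrib_left field_simps)
  have "(\<integral>\<^sup>+\<omega>. ennreal (exp (s * lam * Wn f0 n A \<omega>)) \<partial>sample_space f0 n)
      = (\<integral>\<^sup>+\<omega>. ennreal (exp (\<Sum>i<n. t * (A (\<omega> i) - m))) \<partial>PiM {..<n} (\<lambda>_. P))"
    unfolding sample_space_def P_def eq ..
  also have "\<dots> = (\<integral>\<^sup>+x. ennreal (exp (t * (A x - m))) \<partial>P) ^ n"
    using AP by (intro mgf_prod) (auto intro: P.prob_space_axioms)
  also have "\<dots> \<le> ennreal (exp (t\<^sup>2 * (\<integral>y. (A y)\<^sup>2 \<partial>P))) ^ n"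
    unfolding m_def by (intro power_mono mgf_single[where b=b] P.prob_space_axioms AP AbP t) auto
  also have "\<dots> = ennreal (exp (real n * t\<^sup>2 * (\<integral>y. (A y)\<^sup>2 \<partial>P)))"
    by (simp add: ennreal_power exp_of_nat_mult[symmetric] mult.assoc)
  also have "real n * t\<^sup>2 = lam\<^sup>2"
  proof -
    have s2: "s\<^sup>2 = 1" using s by (metis power2_abs power_one)
    show ?thesis using sq s2 by (simp add: t_def power_divide power_mult_distrib)
  qed
  also have "ennreal (exp (lam\<^sup>2 * (\<integral>y. (A y)\<^sup>2 \<partial>P))) \<le> ennreal (exp (lam\<^sup>2 * (D0 * c2\<^sup>2)))"
    using EA2 by (intro ennreal_leI) (auto intro: mult_left_mono)
  finally show ?thesis .
qed

end

theorem lemma7: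
  fixes \<alpha> \<rho>0 D0 c1 c2 C\<psi> :: real
    and f0 :: "real \<Rightarrow> real"
    and \<psi> :: "nat \<Rightarrow> nat \<Rightarrow> real \<Rightarrow> real"
    and A :: "nat \<Rightarrow> nat \<Rightarrow> nat \<Rightarrow> real \<Rightarrow> real"
  assumes alpha_pos: "\<alpha> > 0"
    and f0_meas: "f0 \<in> borel_measurable borel"
    and f0_bounds: "0 < \<rho>0" "\<And>x. x \<in> {0..1} \<Longrightarrow> \<rho>0 \<le> f0 x \<and> f0 x \<le> D0"
    and f0_density: "(LINT x:{0..1}|lborel. f0 x) = 1"
    and psi_onb: "wavelet_onb \<psi>"
    and psi_loc: "\<And>l. AE x in lborel. x \<in> {0..1} \<longrightarrow>
                     (\<Sum>k<2^l. \<bar>\<psi> l k x\<bar>) \<le> C\<psi> * 2 powr (real l / 2)"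
    and A_meas: "\<And>n l k. n \<ge> 2 \<Longrightarrow> l \<le> Ln \<alpha> n \<Longrightarrow> k < 2^l \<Longrightarrow>
                   A n l k \<in> borel_measurable borel"
    and A_inf: "\<And>n l k. n \<ge> 2 \<Longrightarrow> l \<le> Ln \<alpha> n \<Longrightarrow> k < 2^l \<Longrightarrow>
                   AE x in lborel. x \<in> {0..1} \<longrightarrow> \<bar>A n l k x\<bar> \<le> c1 * sqrt (real n / ln (real n))"
    and A_L2: "\<And>n l k. n \<ge> 2 \<Longrightarrow> l \<le> Ln \<alpha> n \<Longrightarrow> k < 2^l \<Longrightarrow>
                   (\<integral>\<^sup>+ x\<in>{0..1}. ennreal ((A n l k x)\<^sup>2) \<partial>lborel) \<le> ennreal (c2\<^sup>2)"
  shows "\<exists>C. \<forall>n\<ge>2.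
           (\<integral>\<^sup>+ \<omega>. e2ennreal (linf01 (\<lambda>x. Gamma \<psi> f0 n (Ln \<alpha> n) (A n) \<omega> x
                                              - wproj \<psi> (\<lambda>y. ln (f0 y)) (Ln \<alpha> n) x))
              \<partial>sample_space f0 n)
           \<le> ennreal (C * (ln (real n) / real n) powr (\<alpha> / (2 * \<alpha> + 1)))"
proof -
  define c where "c = max c1 1"
  define Cp where "Cp = \<bar>C\<psi>\<bar>"
  have D0: "0 \<le> D0" using f0_bounds(2)[of 0] f0_bounds(1) by auto
  define sig where "sig = D0 * c2\<^sup>2"
  have c: "1 \<le> c" unfolding c_def by simp
  have sig0: "0 \<le> sig" unfolding sig_def using D0 by simp
  have Cp0: "0 \<le> Cp" unfolding Cp_def by simp
  have psi_m[measurable]: "\<And>l k. \<psi> l k \<in> borel_measurable borel"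
    using psi_onb unfolding wavelet_onb_def by blast
  note ctx = f0_meas f0_bounds f0_density
  define Cfin where "Cfin = 4 * Cp * (7 * 2 * c + sig / (2*c))"
  show ?thesis
  proof (intro exI[of _ Cfin] allI impI)
    fix n :: nat assume n: "n \<ge> 2"
    define S where "S = sample_space f0 n"
    interpret S: prob_space S unfolding S_def by (rule space_prob[OF ctx])
    define L where "L = Ln \<alpha> n"
    define lam where "lam = sqrt (ln (real n)) / (2*c)"
    define a where "a l = (real l + 1) * ln 2 + lam\<^sup>2 * sig" for l :: nat
    define W where "W l k \<omega> = Wn f0 n (A n l k) \<omega>" for l k \<omega>
    define Mb where "Mb l \<omega> = a l / lam + (\<Sum>(k,s)\<in>{..<2^l} \<times> {-1,1::real}. exp (- a l) / lam * exp (s * lam * W l k \<omega>))" for l \<omega>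
    define B where "B \<omega> = (\<Sum>l\<le>L. (1 / sqrt (real n)) * (Cp * 2 powr (real l / 2)) * Mb l \<omega>)" for \<omega>
    have lnpos: "0 < ln (real n)" using n by simp
    have lampos: "0 < lam" unfolding lam_def using lnpos c by simp
    have a0: "0 \<le> a l" for l unfolding a_def using sig0 by simp
    have Wm[measurable]: "W l k \<in> borel_measurable S" if "l \<le> L" "k < 2^l" for l k
      unfolding S_def W_def using A_meas[of n l k] n that unfolding L_def by (intro W_meas[OF ctx]) auto
    have Mbm: "Mb l \<in> borel_measurable S" if "l \<le> L" for l
      unfolding Mb_def using Wm[OF that] by measurable (auto simp: mem_Times_iff)
    have Mb_ge: "\<bar>W l k \<omega>\<bar> \<le> Mb l \<omega>" if "k < 2^l" for l k \<omega>
      unfolding Mb_def using that lampos by (intro max_bound2) auto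
    have Mb0: "0 \<le> Mb l \<omega>" for l \<omega> using Mb_ge[of 0 l \<omega>] by simp
    have mgf: "(\<integral>\<^sup>+\<omega>. ennreal (exp (s * lam * W l k \<omega>)) \<partial>S) \<le> ennreal (exp (lam\<^sup>2 * sig))"
      if "l \<le> L" "k < 2^l" "s \<in> {-1,1}" for l k s
    proof -
      define b where "b = c * sqrt (real n / ln (real n))"
      have Ab: "AE x in lborel. x \<in> {0..1} \<longrightarrow> \<bar>A n l k x\<bar> \<le> b"
        using A_inf[of n l k] n that unfolding L_def
      proof -
        have "c1 * sqrt (real n / ln (real n)) \<le> b" unfolding b_def c_def using lnpos by (intro mult_right_mono) auto
        thus ?thesis using A_inf[of n l k] n that unfolding L_def by (auto elim!: eventually_mono)
      qed
      have lb: "lam * (2 * b) = sqrt (real n)"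
        unfolding lam_def b_def using lnpos c n by (simp add: real_sqrt_divide field_simps)
      show ?thesis unfolding S_def W_def sig_def
        using W_mgf[OF ctx, where n=n and A="A n l k" and b=b and s=s and lam=lam]
          n A_meas[of n l k] Ab A_L2[of n l k] that lampos lb unfolding L_def by auto
    qed
    have intMb: "(\<integral>\<^sup>+\<omega>. ennreal (Mb l \<omega>) \<partial>S) \<le> ennreal ((a l + 1) / lam)" if l: "l \<le> L" for l
    proof -
      define e where "e = exp (- a l) / lam"
      have e0: "0 \<le> e" unfolding e_def using lampos by simp
      have fin: "finite ({..<(2::nat)^l} \<times> {-1,1::real})" by simp
      have "(\<integral>\<^sup>+\<omega>. ennreal (Mb l \<omega>) \<partial>S)
          = (\<integral>\<^sup>+\<omega>. ennreal (a l / lam) + ennreal (\<Sum>(k,s)\<in>{..<2^l} \<times> {-1,1::real}. e * exp (s * lam * W l k \<omega>)) \<partial>S)"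
        unfolding Mb_def e_def using a0 lampos
        by (intro nn_integral_cong ennreal_plus sum_nonneg) auto
      also have "\<dots> = (\<integral>\<^sup>+\<omega>. ennreal (a l / lam) \<partial>S) + (\<integral>\<^sup>+\<omega>. ennreal (\<Sum>(k,s)\<in>{..<2^l} \<times> {-1,1::real}. e * exp (s * lam * W l k \<omega>)) \<partial>S)"
        using Wm[OF l] by (intro nn_integral_add) (measurable, auto simp: mem_Times_iff l)
      also have "(\<integral>\<^sup>+\<omega>. ennreal (a l / lam) \<partial>S) = ennreal (a l / lam)"
        by (simp add: S.emeasure_space_1)
      also have "(\<integral>\<^sup>+\<omega>. ennreal (\<Sum>(k,s)\<in>{..<(2::nat)^l} \<times> {-1,1::real}. e * exp (s * lam * W l k \<omega>)) \<partial>S)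
          \<le> ennreal (\<Sum>(k,s)\<in>{..<(2::nat)^l} \<times> {-1,1::real}. e * exp (lam\<^sup>2 * sig))"
      proof (rule nn_sum_bound[OF fin])
        fix j assume j: "j \<in> {..<(2::nat)^l} \<times> {-1,1::real}"
        then obtain k s where js: "j = (k, s)" "k < 2^l" "s \<in> {-1,1}" by auto
        show "(\<lambda>\<omega>. case j of (k,s) \<Rightarrow> e * exp (s * lam * W l k \<omega>)) \<in> borel_measurable S"
          using js Wm[OF l, of k] by auto
        show "(\<integral>\<^sup>+\<omega>. ennreal (case j of (k,s) \<Rightarrow> e * exp (s * lam * W l k \<omega>)) \<partial>S)
            \<le> ennreal (case j of (k,s) \<Rightarrow> e * exp (lam\<^sup>2 * sig))"
          using js Wm[OF l, of k] e0 mgf[OF l, of k s] by (auto intro!: nn_cmult_bound)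
        show "0 \<le> (case j of (k,s) \<Rightarrow> e * exp (lam\<^sup>2 * sig))" using js e0 by auto
        fix \<omega> show "0 \<le> (case j of (k,s) \<Rightarrow> e * exp (s * lam * W l k \<omega>))" using js e0 by auto
      qed
      also have "(\<Sum>(k,s)\<in>{..<(2::nat)^l} \<times> {-1,1::real}. e * exp (lam\<^sup>2 * sig)) = 1 / lam"
      proof -
        have "(\<Sum>(k,s)\<in>{..<(2::nat)^l} \<times> {-1,1::real}. e * exp (lam\<^sup>2 * sig)) = 2^l * 2 * (e * exp (lam\<^sup>2 * sig))"
          by (simp add: card_cartesian_product)
        moreover have "exp (- a l) = exp (- (lam\<^sup>2 * sig)) / 2^(l+1)"
        proof -
          have "exp ((real l + 1) * ln 2) = 2^(l+1)"
            using exp_of_nat_mult[of "l+1" "ln (2::real)"] by (simp add: algebra_simps)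
          thus ?thesis unfolding a_def by (simp add: exp_diff exp_minus exp_add field_simps)
        qed
        ultimately show ?thesis unfolding e_def using lampos by (simp add: exp_minus field_simps)
      qed
      finally show ?thesis using a0 lampos
        by (simp add: ennreal_plus[symmetric] add_divide_distrib del: ennreal_plus)
    qed
    have pw: "linf01 (\<lambda>x. Gamma \<psi> f0 n L (A n) \<omega> x - wproj \<psi> (\<lambda>y. ln (f0 y)) L x) \<le> ereal (B \<omega>)" for \<omega>
    proof -
      have eqG: "(\<lambda>x. Gamma \<psi> f0 n L (A n) \<omega> x - wproj \<psi> (\<lambda>y. ln (f0 y)) L x)
          = (\<lambda>x. (1 / sqrt (real n)) * (\<Sum>l\<le>L. \<Sum>k<2^l. W l k \<omega> * \<psi> l k x))"
        by (simp add: Gamma_def W_def)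
      have AEall: "AE x in leb01. \<forall>l\<in>{..L}. (\<Sum>k<2^l. \<bar>\<psi> l k x\<bar>) \<le> C\<psi> * 2 powr (real l / 2)"
      proof (intro eventually_ball_finite ballI)
        fix l :: nat
        show "AE x in leb01. (\<Sum>k<2^l. \<bar>\<psi> l k x\<bar>) \<le> C\<psi> * 2 powr (real l / 2)"
          using psi_loc[of l] by (subst AE_restrict_space_iff) auto
      qed auto
      have meas: "(\<lambda>x. ereal \<bar>(1 / sqrt (real n)) * (\<Sum>l\<le>L. \<Sum>k<2^l. W l k \<omega> * \<psi> l k x)\<bar>) \<in> borel_measurable leb01"
        by (intro meas_leb01) measurable
      show ?thesis unfolding linf01_def eqG
      proof (intro esssup_I meas)
        show "AE x in leb01. ereal \<bar>(1 / sqrt (real n)) * (\<Sum>l\<le>L. \<Sum>k<2^l. W l k \<omega> * \<psi> l k x)\<bar> \<le> ereal (B \<omega>)"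
          using AEall
        proof eventually_elim
          case (elim x)
          have "\<bar>(1 / sqrt (real n)) * (\<Sum>l\<le>L. \<Sum>k<2^l. W l k \<omega> * \<psi> l k x)\<bar>
              \<le> (1 / sqrt (real n)) * (\<Sum>l\<le>L. \<Sum>k<2^l. \<bar>W l k \<omega>\<bar> * \<bar>\<psi> l k x\<bar>)"
          proof -
            have "\<bar>\<Sum>l\<le>L. \<Sum>k<2^l. W l k \<omega> * \<psi> l k x\<bar> \<le> (\<Sum>l\<le>L. \<bar>\<Sum>k<2^l. W l k \<omega> * \<psi> l k x\<bar>)"
              by (rule sum_abs)
            also have "\<dots> \<le> (\<Sum>l\<le>L. \<Sum>k<2^l. \<bar>W l k \<omega>\<bar> * \<bar>\<psi> l k x\<bar>)"
              by (intro sum_mono order_trans[OF sum_abs]) (simp add: abs_mult)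
            finally show ?thesis by (simp add: abs_mult divide_right_mono)
          qed
          also have "\<dots> \<le> (1 / sqrt (real n)) * (\<Sum>l\<le>L. \<Sum>k<2^l. Mb l \<omega> * \<bar>\<psi> l k x\<bar>)"
            using Mb_ge by (intro mult_left_mono sum_mono mult_right_mono) auto
          also have "\<dots> = (1 / sqrt (real n)) * (\<Sum>l\<le>L. Mb l \<omega> * (\<Sum>k<2^l. \<bar>\<psi> l k x\<bar>))"
            by (simp add: sum_distrib_left)
          also have "\<dots> \<le> (1 / sqrt (real n)) * (\<Sum>l\<le>L. Mb l \<omega> * (Cp * 2 powr (real l / 2)))"
          proof -
            have "Mb l \<omega> * (\<Sum>k<2^l. \<bar>\<psi> l k x\<bar>) \<le> Mb l \<omega> * (Cp * 2 powr (real l / 2))" if "l \<in> {..L}" for l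
            proof -
              have "(\<Sum>k<2^l. \<bar>\<psi> l k x\<bar>) \<le> C\<psi> * 2 powr (real l / 2)" using elim that by auto
              also have "\<dots> \<le> Cp * 2 powr (real l / 2)" unfolding Cp_def by (intro mult_right_mono) auto
              finally show ?thesis using Mb0 by (intro mult_left_mono) auto
            qed
            hence "(\<Sum>l\<le>L. Mb l \<omega> * (\<Sum>k<2^l. \<bar>\<psi> l k x\<bar>)) \<le> (\<Sum>l\<le>L. Mb l \<omega> * (Cp * 2 powr (real l / 2)))"
              by (rule sum_mono)
            thus ?thesis by (intro mult_left_mono) auto
          qed
          also have "\<dots> = B \<omega>" unfolding B_def by (simp add: sum_distrib_left algebra_simps)
          finally show ?case by simp
        qed
      qed
    qed
    have "(\<integral>\<^sup>+\<omega>. e2ennreal (linf01 (\<lambda>x. Gamma \<psi> f0 n L (A n) \<omega> x - wproj \<psi> (\<lambda>y. ln (f0 y)) L x)) \<partial>S)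
        \<le> (\<integral>\<^sup>+\<omega>. ennreal (B \<omega>) \<partial>S)"
      using pw by (intro nn_integral_mono) (metis e2ennreal_ereal e2ennreal_mono)
    also have "\<dots> \<le> ennreal (\<Sum>l\<le>L. (1 / sqrt (real n)) * (Cp * 2 powr (real l / 2)) * ((a l + 1) / lam))"
      unfolding B_def
    proof (intro nn_sum_bound)
      fix l assume l: "l \<in> {..L}"
      show "(\<lambda>\<omega>. 1 / sqrt (real n) * (Cp * 2 powr (real l / 2)) * Mb l \<omega>) \<in> borel_measurable S"
        using Mbm[of l] l by auto
      show "(\<integral>\<^sup>+\<omega>. ennreal (1 / sqrt (real n) * (Cp * 2 powr (real l / 2)) * Mb l \<omega>) \<partial>S)
          \<le> ennreal (1 / sqrt (real n) * (Cp * 2 powr (real l / 2)) * ((a l + 1) / lam))"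
        using Mbm[of l] l Cp0 intMb[of l] a0 lampos by (intro nn_cmult_bound) auto
    qed (use Cp0 Mb0 a0 lampos in auto)
    also have "\<dots> \<le> ennreal (Cfin * (ln (real n) / real n) powr (\<alpha> / (2 * \<alpha> + 1)))"
    proof (intro ennreal_leI)
      have "(\<Sum>l\<le>L. (1 / sqrt (real n)) * (Cp * 2 powr (real l / 2)) * ((a l + 1) / lam))
          = (1 / sqrt (real n)) * (\<Sum>l\<le>Ln \<alpha> n. Cp * 2 powr (real l / 2) *
            (((real l + 1) * ln 2 + lam\<^sup>2 * sig + 1) / lam))"
        unfolding L_def a_def sum_distrib_left by (intro sum.cong refl) (simp only: mult.assoc)
      also have "\<dots> \<le> Cfin * (ln (real n) / real n) powr (\<alpha> / (2 * \<alpha> + 1))"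
        unfolding Cfin_def lam_def using final_arith[OF alpha_pos n c sig0 Cp0] by simp
      finally show "(\<Sum>l\<le>L. (1 / sqrt (real n)) * (Cp * 2 powr (real l / 2)) * ((a l + 1) / lam))
          \<le> Cfin * (ln (real n) / real n) powr (\<alpha> / (2 * \<alpha> + 1))" .
    qed
    finally show "(\<integral>\<^sup>+\<omega>. e2ennreal (linf01 (\<lambda>x. Gamma \<psi> f0 n (Ln \<alpha> n) (A n) \<omega> x
                                              - wproj \<psi> (\<lambda>y. ln (f0 y)) (Ln \<alpha> n) x))
              \<partial>sample_space f0 n)
           \<le> ennreal (Cfin * (ln (real n) / real n) powr (\<alpha> / (2 * \<alpha> + 1)))"
      unfolding S_def L_def .
  qed
qed

end
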